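(* Let $\mathcal{V},\bar{\mathcal{V}}$ be disjoint finite sets with $|\mathcal{V}|=N$, $|\bar{\mathcal{V}}|=M$, and let $G:2^{\mathcal{V}\cup\bar{\mathcal{V}}}\to\mathbb{R}$ be a submodular, nonnegative set function with $G(\emptyset)=0$ and $G(\mathcal{V}\cup\bar{\mathcal{V}})=0$, with Lovász extension $g(\mathbf{x},\bar{\mathbf{x}})$ ($\mathbf{x}\in\mathbb{R}^N$ indexed by $\mathcal{V}$, $\bar{\mathbf{x}}\in\mathbb{R}^M$ indexed by $\bar{\mathcal{V}}$). Let $\mathbf{x}\in\mathbb{R}^N$ have minimum entry $a$ and maximum entry $b$. Then $g(\mathbf{x},\bar{\mathbf{x}})\ge g(\mathbf{x},\mathcal{P}_{a,b}(\bar{\mathbf{x}}))$ for every $\bar{\mathbf{x}}\in\mathbb{R}^M$. Consequently, for any $a'<a$ and $b'>b$, $$\min_{\bar{\mathbf{x}}\in\mathbb{R}^M}g(\mathbf{x},\bar{\mathbf{x}})=\min_{\bar{\mathbf{x}}\in[a',b']^M}g(\mathbf{x},\bar{\mathbf{x}})=\min_{\bar{\mathbf{x}}\in[a,b]^M}g(\mathbf{x},\bar{\mathbf{x}}).$$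
   Context: Lovász extension: for a set function $F:2^{[n]}\to\mathbb{R}$ with $F(\emptyset)=0$, and $\mathbf{x}\in\mathbb{R}^n$ with entries sorted as $x_{i_1}\ge\cdots\ge x_{i_n}$, $f(\mathbf{x})=\sum_{j=1}^{n-1}F(\{i_1,\dots,i_j\})(x_{i_j}-x_{i_{j+1}})+F([n])x_{i_n}$. A set function $F$ is submodular if $F(\mathcal{S}_1)+F(\mathcal{S}_2)\ge F(\mathcal{S}_1\cup\mathcal{S}_2)+F(\mathcal{S}_1\cap\mathcal{S}_2)$ for all $\mathcal{S}_1,\mathcal{S}_2$. $\mathcal{P}_{a,b}(\bar{\mathbf{x}})$ denotes the vector obtained by projecting each entry of $\bar{\mathbf{x}}$ onto the interval $[a,b]$. *)

theory Defs
  imports Complex_Main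
begin

definition sorted_enum :: "'a set \<Rightarrow> ('a \<Rightarrow> real) \<Rightarrow> 'a list" where
  "sorted_enum S x = (SOME l. distinct l \<and> set l = S \<and> sorted_wrt (\<lambda>i j. x i \<ge> x j) l)"

definition lovasz :: "('a set \<Rightarrow> real) \<Rightarrow> 'a set \<Rightarrow> ('a \<Rightarrow> real) \<Rightarrow> real" where
  "lovasz F S x = (if S = {} then 0 else
     (let l = sorted_enum S x; n = length l in
       (\<Sum>j<n - 1. F (set (take (Suc j) l)) * (x (l ! j) - x (l ! Suc j)))
       + F S * x (l ! (n - 1))))"

definition submodular_on :: "'a set \<Rightarrow> ('a set \<Rightarrow> real) \<Rightarrow> bool" where
  "submodular_on S F = (\<forall>S1 S2. S1 \<subseteq> S \<longrightarrow> S2 \<subseteq> S \<longrightarrow>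
      F S1 + F S2 \<ge> F (S1 \<union> S2) + F (S1 \<inter> S2))"

definition proj :: "real \<Rightarrow> real \<Rightarrow> ('a \<Rightarrow> real) \<Rightarrow> ('a \<Rightarrow> real)" where
  "proj a b xb = (\<lambda>i. max a (min b (xb i)))"

definition joint :: "'a set \<Rightarrow> ('a \<Rightarrow> real) \<Rightarrow> ('a \<Rightarrow> real) \<Rightarrow> ('a \<Rightarrow> real)" where
  "joint V x xb = (\<lambda>i. if i \<in> V then x i else xb i)"

definition is_min_value :: "real \<Rightarrow> 'b set \<Rightarrow> ('b \<Rightarrow> real) \<Rightarrow> bool" where
  "is_min_value m A f = ((\<exists>y\<in>A. f y = m) \<and> (\<forall>y\<in>A. m \<le> f y))"

end

theory Submission
  imports Defs "HOL-Analysis.Analysis"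
begin

lemma sorted_enum_props:
  assumes "finite S"
  shows "distinct (sorted_enum S y) \<and> set (sorted_enum S y) = S \<and>
         sorted_wrt (\<lambda>i j. y i \<ge> y j) (sorted_enum S y)"
proof -
  obtain xs where xs: "set xs = S" "distinct xs" using finite_distinct_list[OF assms] by blast
  let ?l = "sort_key (\<lambda>i. - y i) xs"
  have "sorted (map (\<lambda>i. - y i) ?l)" by (rule sorted_sort_key)
  hence "sorted_wrt (\<lambda>i j. y i \<ge> y j) ?l" by (simp add: sorted_map)
  moreover have "distinct ?l" "set ?l = S" using xs by auto
  ultimately have "\<exists>l. distinct l \<and> set l = S \<and> sorted_wrt (\<lambda>i j. y i \<ge> y j) l" by blast
  from someI_ex[OF this] show ?thesis unfolding sorted_enum_def by simp
qed

lemma rep: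
  fixes F :: "'a set \<Rightarrow> real" and y :: "'a \<Rightarrow> real"
  assumes fin: "finite S" and ne: "S \<noteq> {}" and FS: "F S = 0" and F0: "F {} = 0"
    and bnd: "\<forall>i\<in>S. lo \<le> y i \<and> y i \<le> hi"
  shows "((\<lambda>t. F {i\<in>S. t \<le> y i}) has_integral lovasz F S y) {lo..hi}"
proof -
  define l where "l = sorted_enum S y"
  define n where "n = length l"
  define c where "c j = y (l ! j)" for j
  define f where "f t = F {i\<in>S. t \<le> y i}" for t
  have dl: "distinct l" and sl: "set l = S" and so: "sorted_wrt (\<lambda>i j. y i \<ge> y j) l"
    using sorted_enum_props[OF fin] unfolding l_def by auto
  have npos: "n > 0" using ne sl n_def by auto
  have mono: "c q \<le> c p" if "p \<le> q" "q < n" for p q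
  proof (cases "p = q")
    case False thus ?thesis using sorted_wrt_nth_less[OF so, of p q] that n_def c_def by auto
  qed simp
  have memS: "\<And>i. i \<in> S \<Longrightarrow> \<exists>p<n. i = l ! p" using sl n_def by (metis in_set_conv_nth)
  have cS: "\<And>p. p < n \<Longrightarrow> l ! p \<in> S" using sl n_def by auto
  have clo: "lo \<le> c (n - 1)" and chi: "c 0 \<le> hi" using bnd cS npos c_def by auto
  have lov: "lovasz F S y = (\<Sum>j<n - 1. F (set (take (Suc j) l)) * (c j - c (Suc j)))"
    using ne FS unfolding lovasz_def l_def[symmetric] n_def[symmetric] c_def[symmetric] Let_def
    by simp
  have step: "\<forall>k<n. (f has_integral (\<Sum>j<k. F (set (take (Suc j) l)) * (c j - c (Suc j)))) {c k..hi}"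
  proof (intro allI impI)
    fix k assume "k < n"
    thus "(f has_integral (\<Sum>j<k. F (set (take (Suc j) l)) * (c j - c (Suc j)))) {c k..hi}"
    proof (induction k)
      case 0
      have "f t = 0" if "t \<in> {c 0..hi} - {c 0}" for t
      proof -
        have "\<forall>i\<in>S. y i < t"
        proof
          fix i assume "i \<in> S"
          then obtain p where "p < n" "i = l ! p" using memS by blast
          thus "y i < t" using mono[of 0 p] that c_def by auto
        qed
        hence E: "{i\<in>S. t \<le> y i} = {}" by auto
        show ?thesis unfolding f_def E by (rule F0)
      qed
      moreover have "((\<lambda>t. 0::real) has_integral 0) {c 0..hi}" by simp
      ultimately have "(f has_integral 0) {c 0..hi}"
        using has_integral_spike_finite[of "{c 0}" "{c 0..hi}" f "\<lambda>_. 0" 0] by auto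
      thus ?case by simp
    next
      case (Suc k)
      have IH: "(f has_integral (\<Sum>j<k. F (set (take (Suc j) l)) * (c j - c (Suc j)))) {c k..hi}"
        using Suc by simp
      have le: "c (Suc k) \<le> c k" "c k \<le> hi" using mono[of k "Suc k"] Suc.prems chi mono[of 0 k] by auto
      have "f t = F (set (take (Suc k) l))" if "t \<in> {c (Suc k)..c k} - {c (Suc k), c k}" for t
      proof -
        have t: "c (Suc k) < t" "t < c k" using that by auto
        have "{i\<in>S. t \<le> y i} = set (take (Suc k) l)"
        proof (safe)
          fix i assume "i \<in> S" "t \<le> y i"
          then obtain p where p: "p < n" "i = l ! p" using memS by blast
          have "p \<le> k"
          proof (rule ccontr)
            assume "\<not> p \<le> k"
            hence "c p \<le> c (Suc k)" using mono p by auto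
            thus False using t \<open>t \<le> y i\<close> p c_def by auto
          qed
          thus "i \<in> set (take (Suc k) l)" using p n_def
            by (simp add: in_set_conv_nth) (metis less_Suc_eq_le nth_take)
        next
          fix i assume "i \<in> set (take (Suc k) l)"
          then obtain p where p: "p < length (take (Suc k) l)" "i = take (Suc k) l ! p"
            by (metis in_set_conv_nth)
          hence p2: "p \<le> k" "p < n" "i = l ! p" using n_def by auto
          thus "i \<in> S" using cS by auto
          have "c k \<le> c p" using mono p2 Suc.prems by auto
          thus "t \<le> y i" using t p2 c_def by auto
        qed
        thus ?thesis unfolding f_def by simp
      qed
      moreover have "((\<lambda>t. F (set (take (Suc k) l))) has_integral
                     F (set (take (Suc k) l)) * (c k - c (Suc k))) {c (Suc k)..c k}"
        using has_integral_const_real[of "F (set (take (Suc k) l))" "c (Suc k)" "c k"] le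
        by (simp add: mult.commute)
      ultimately have "(f has_integral F (set (take (Suc k) l)) * (c k - c (Suc k))) {c (Suc k)..c k}"
        using has_integral_spike_finite[of "{c (Suc k), c k}" "{c (Suc k)..c k}" f] by auto
      from has_integral_combine[OF le this IH]
      show ?case by (simp add: add.commute)
    qed
  qed
  have A: "(f has_integral lovasz F S y) {c (n - 1)..hi}" using step npos lov by simp
  have "f t = 0" if "t \<in> {lo..c (n-1)}" for t
  proof -
    have "{i\<in>S. t \<le> y i} = S"
    proof safe
      fix i assume "i \<in> S"
      then obtain p where p: "p < n" "i = l ! p" using memS by blast
      thus "t \<le> y i" using mono[of p "n-1"] that c_def npos by force
    qed
    thus ?thesis unfolding f_def using FS by simp
  qed
  hence B: "(f has_integral 0) {lo..c (n - 1)}"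
    using has_integral_spike_finite[of "{}" "{lo..c (n-1)}" f "\<lambda>_. 0" 0] by simp
  have "c (n-1) \<le> hi" using mono[of 0 "n-1"] chi npos by auto
  from has_integral_combine[OF clo this B A] show ?thesis unfolding f_def by simp
qed

lemma cmp:
  fixes F :: "'a set \<Rightarrow> real"
  assumes fin: "finite S" and ne: "S \<noteq> {}" and FS: "F S = 0" and F0: "F {} = 0"
    and le: "\<And>t. F {i\<in>S. t \<le> y1 i} \<le> F {i\<in>S. t \<le> y2 i}"
  shows "lovasz F S y1 \<le> lovasz F S y2"
proof -
  define A where "A = y1 ` S \<union> y2 ` S"
  have fA: "finite A" "A \<noteq> {}" using fin ne A_def by auto
  have b: "\<forall>i\<in>S. Min A \<le> yy i \<and> yy i \<le> Max A" if "yy = y1 \<or> yy = y2" for yy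
    using that fA A_def by auto
  show ?thesis
    by (rule has_integral_le[OF rep[OF fin ne FS F0 b[of y1]] rep[OF fin ne FS F0 b[of y2]] le]) auto
qed

lemma lvl:
  assumes "V \<inter> W = {}"
  shows "{i\<in>V \<union> W. t \<le> joint V x z i} = {i\<in>V. t \<le> x i} \<union> {i\<in>W. t \<le> z i}"
  using assms unfolding joint_def by auto

lemma subD:
  assumes "submodular_on S F" "A \<subseteq> S" "B \<subseteq> S"
  shows "F A + F B \<ge> F (A \<union> B) + F (A \<inter> B)"
  using assms unfolding submodular_on_def by blast

theorem lemma3:
  fixes V W :: "'a set" and G :: "'a set \<Rightarrow> real" and x :: "'a \<Rightarrow> real"
    and a b :: real
  assumes "finite V" and "finite W" and "V \<inter> W = {}" and "V \<noteq> {}"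
    and "submodular_on (V \<union> W) G"
    and "\<forall>S. S \<subseteq> V \<union> W \<longrightarrow> G S \<ge> 0"
    and "G {} = 0" and "G (V \<union> W) = 0"
    and "a = Min (x ` V)" and "b = Max (x ` V)"
  shows "(\<forall>xb. lovasz G (V \<union> W) (joint V x xb)
              \<ge> lovasz G (V \<union> W) (joint V x (proj a b xb)))
       \<and> (\<forall>a' b'. a' < a \<longrightarrow> b' > b \<longrightarrow>
            (\<exists>m. is_min_value m UNIV (\<lambda>xb. lovasz G (V \<union> W) (joint V x xb))
               \<and> is_min_value m {xb. \<forall>i\<in>W. a' \<le> xb i \<and> xb i \<le> b'}
                   (\<lambda>xb. lovasz G (V \<union> W) (joint V x xb))
               \<and> is_min_value m {xb. \<forall>i\<in>W. a \<le> xb i \<and> xb i \<le> b}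
                   (\<lambda>xb. lovasz G (V \<union> W) (joint V x xb))))"
proof -
  note finV = assms(1) and finW = assms(2) and disj = assms(3) and neV = assms(4)
    and sub = assms(5) and nn = assms(6) and G0 = assms(7) and GS = assms(8)
  define L where "L xb = lovasz G (V \<union> W) (joint V x xb)" for xb
  have finS: "finite (V \<union> W)" and neS: "V \<union> W \<noteq> {}" using finV finW neV by auto
  have xa: "\<And>v. v \<in> V \<Longrightarrow> a \<le> x v" and xb_: "\<And>v. v \<in> V \<Longrightarrow> x v \<le> b"
    using assms(9,10) finV by auto
  have ab: "a \<le> b" using xa xb_ neV by force
  have cmpL: "L y1 \<le> L y2" if "\<And>t. G ({i\<in>V. t \<le> x i} \<union> {i\<in>W. t \<le> y1 i})
        \<le> G ({i\<in>V. t \<le> x i} \<union> {i\<in>W. t \<le> y2 i})" for y1 y2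
    unfolding L_def
  proof (rule cmp[OF finS neS GS G0])
    fix t show "G {i \<in> V \<union> W. t \<le> joint V x y1 i} \<le> G {i \<in> V \<union> W. t \<le> joint V x y2 i}"
      unfolding lvl[OF disj] by (rule that)
  qed
  have nnG: "0 \<le> G ({i\<in>V. t \<le> x i} \<union> {i\<in>W. t \<le> z i})" for t z
    using nn by (metis (no_types, lifting) Un_mono mem_Collect_eq subsetI)
  have P1: "L (proj a b xb) \<le> L xb" for xb
  proof (rule cmpL)
    fix t
    show "G ({i\<in>V. t \<le> x i} \<union> {i\<in>W. t \<le> proj a b xb i})
        \<le> G ({i\<in>V. t \<le> x i} \<union> {i\<in>W. t \<le> xb i})"
    proof (cases "t \<le> a")
      case True
      hence "{i\<in>V. t \<le> x i} \<union> {i\<in>W. t \<le> proj a b xb i} = V \<union> W"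
        using xa unfolding proj_def by fastforce
      hence "G ({i\<in>V. t \<le> x i} \<union> {i\<in>W. t \<le> proj a b xb i}) = G (V \<union> W)" by (rule arg_cong)
      hence "G ({i\<in>V. t \<le> x i} \<union> {i\<in>W. t \<le> proj a b xb i}) = 0" using GS by linarith
      thus ?thesis using nnG[of t xb] by linarith
    next
      case False
      show ?thesis
      proof (cases "t \<le> b")
        case True
        hence "{i\<in>W. t \<le> proj a b xb i} = {i\<in>W. t \<le> xb i}"
          using False unfolding proj_def by auto
        thus ?thesis by simp
      next
        case False
        hence "{i\<in>V. t \<le> x i} \<union> {i\<in>W. t \<le> proj a b xb i} = {}"
          using xb_ ab unfolding proj_def by fastforce
        hence "G ({i\<in>V. t \<le> x i} \<union> {i\<in>W. t \<le> proj a b xb i}) = G {}" by (rule arg_cong)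
        hence "G ({i\<in>V. t \<le> x i} \<union> {i\<in>W. t \<le> proj a b xb i}) = 0" using G0 by linarith
        thus ?thesis using nnG[of t xb] by linarith
      qed
    qed
  qed
  define X where "X t = {i\<in>V. t \<le> x i}" for t
  define Mz where "Mz Y = {B. B \<subseteq> W \<and> (\<forall>B'. B' \<subseteq> W \<longrightarrow> G (Y \<union> B) \<le> G (Y \<union> B'))}" for Y
  define M where "M Y = \<Union> (Mz Y)" for Y
  have Mz_ne: "Mz Y \<noteq> {}" for Y
  proof -
    define I where "I = (\<lambda>B. G (Y \<union> B)) ` Pow W"
    have fI: "finite I" "I \<noteq> {}" using finW I_def by auto
    have "Min I \<in> I" using Min_in[OF fI] .
    then obtain B where B: "B \<in> Pow W" "G (Y \<union> B) = Min I" unfolding I_def by auto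
    have "\<forall>B'\<in>Pow W. G (Y \<union> B) \<le> G (Y \<union> B')"
      using B Min_le[OF fI(1)] unfolding I_def by auto
    hence "B \<in> Mz Y" using B unfolding Mz_def by auto
    thus ?thesis by blast
  qed
  have union_min: "B1 \<union> B2 \<in> Mz Y" if "Y \<subseteq> V" "B1 \<in> Mz Y" "B2 \<in> Mz Y" for Y B1 B2
  proof -
    have s: "G (Y \<union> B1) + G (Y \<union> B2) \<ge> G (Y \<union> (B1 \<union> B2)) + G (Y \<union> (B1 \<inter> B2))"
    proof -
      have "G (Y \<union> B1) + G (Y \<union> B2) \<ge> G ((Y \<union> B1) \<union> (Y \<union> B2)) + G ((Y \<union> B1) \<inter> (Y \<union> B2))"
        by (rule subD[OF sub]) (use that in \<open>auto simp: Mz_def\<close>)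
      moreover have "(Y \<union> B1) \<union> (Y \<union> B2) = Y \<union> (B1 \<union> B2)" "(Y \<union> B1) \<inter> (Y \<union> B2) = Y \<union> (B1 \<inter> B2)" by auto
      ultimately show ?thesis by simp
    qed
    have m1: "\<forall>B'. B' \<subseteq> W \<longrightarrow> G (Y \<union> B1) \<le> G (Y \<union> B')" "B1 \<subseteq> W"
      using that unfolding Mz_def by auto
    have "G (Y \<union> B1) \<le> G (Y \<union> (B1 \<inter> B2))" using m1(1)[rule_format, of "B1 \<inter> B2"] m1(2) by auto
    hence c1: "G (Y \<union> (B1 \<union> B2)) \<le> G (Y \<union> B2)" using s by simp
    have c0: "B1 \<union> B2 \<subseteq> W" using that unfolding Mz_def by auto
    have c2: "\<forall>B'. B' \<subseteq> W \<longrightarrow> G (Y \<union> B2) \<le> G (Y \<union> B')" using that unfolding Mz_def by auto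
    have c3: "\<forall>B'. B' \<subseteq> W \<longrightarrow> G (Y \<union> (B1 \<union> B2)) \<le> G (Y \<union> B')"
    proof (intro allI impI)
      fix B' :: "'a set" assume "B' \<subseteq> W"
      thus "G (Y \<union> (B1 \<union> B2)) \<le> G (Y \<union> B')" using c1 c2[rule_format, of B'] by linarith
    qed
    show ?thesis unfolding Mz_def using c0 c3 by (intro CollectI conjI)
  qed
  have M_in: "M Y \<in> Mz Y" if "Y \<subseteq> V" for Y
  proof -
    have fin: "finite (Mz Y)" by (rule finite_subset[of _ "Pow W"]) (auto simp: Mz_def finW)
    have "\<Union> A \<in> Mz Y" if "finite A" "A \<noteq> {}" "A \<subseteq> Mz Y" for A
      using that
    proof (induction A rule: finite_ne_induct)
      case (singleton B) thus ?case by simp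
    next
      case (insert B A) thus ?case using union_min[OF \<open>Y \<subseteq> V\<close>] by simp
    qed
    thus ?thesis unfolding M_def using fin Mz_ne by blast
  qed
  have M_mono: "M Y' \<subseteq> M Y" if "Y' \<subseteq> Y" "Y \<subseteq> V" for Y Y'
  proof
    fix i assume i: "i \<in> M Y'"
    have Y'V: "Y' \<subseteq> V" using that by auto
    define B where "B = M Y" define B' where "B' = M Y'"
    have B: "B \<in> Mz Y" and B': "B' \<in> Mz Y'" using M_in that Y'V B_def B'_def by auto
    have BW: "B \<subseteq> W" "B' \<subseteq> W" using B B' unfolding Mz_def by auto
    have "G (Y \<union> B) + G (Y' \<union> B') \<ge> G ((Y \<union> B) \<union> (Y' \<union> B')) + G ((Y \<union> B) \<inter> (Y' \<union> B'))"
      by (rule subD[OF sub]) (use that BW in auto)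
    moreover have "(Y \<union> B) \<union> (Y' \<union> B') = Y \<union> (B \<union> B')" using that by auto
    moreover have "(Y \<union> B) \<inter> (Y' \<union> B') = Y' \<union> (B \<inter> B')" using that BW disj by auto
    moreover have "G (Y' \<union> B') \<le> G (Y' \<union> (B \<inter> B'))"
    proof -
      have m: "\<forall>B''. B'' \<subseteq> W \<longrightarrow> G (Y' \<union> B') \<le> G (Y' \<union> B'')" using B' unfolding Mz_def by auto
      have "B \<inter> B' \<subseteq> W" using BW by auto
      thus ?thesis using m by blast
    qed
    ultimately have "G (Y \<union> (B \<union> B')) \<le> G (Y \<union> B)" by simp
    hence c1: "G (Y \<union> (B \<union> B')) \<le> G (Y \<union> B)" .
    have c2: "\<forall>B''. B'' \<subseteq> W \<longrightarrow> G (Y \<union> B) \<le> G (Y \<union> B'')" using B unfolding Mz_def by auto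
    have c3: "\<forall>B''. B'' \<subseteq> W \<longrightarrow> G (Y \<union> (B \<union> B')) \<le> G (Y \<union> B'')"
    proof (intro allI impI)
      fix B'' :: "'a set" assume "B'' \<subseteq> W"
      thus "G (Y \<union> (B \<union> B')) \<le> G (Y \<union> B'')" using c1 c2[rule_format, of B''] by linarith
    qed
    have c0: "B \<union> B' \<subseteq> W" using BW by auto
    have "B \<union> B' \<in> Mz Y" unfolding Mz_def using c0 c3 by (intro CollectI conjI)
    hence "B' \<subseteq> M Y" unfolding M_def by auto
    thus "i \<in> M Y" using i B'_def by auto
  qed
  have MV: "M V = W"
  proof -
    have "\<forall>B'. B' \<subseteq> W \<longrightarrow> G (V \<union> W) \<le> G (V \<union> B')"
    proof (intro allI impI)
      fix B' :: "'a set" assume "B' \<subseteq> W"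
      hence "V \<union> B' \<subseteq> V \<union> W" by auto
      thus "G (V \<union> W) \<le> G (V \<union> B')" using nn GS by simp
    qed
    hence "W \<in> Mz V" unfolding Mz_def by simp
    moreover have "M V \<subseteq> W" using M_in[of V] unfolding Mz_def by auto
    ultimately show ?thesis unfolding M_def by auto
  qed
  define xs where "xs i = Max (insert a (x ` {v\<in>V. i \<in> M (X (x v))}))" for i
  have xs_ge: "t \<le> xs i \<longleftrightarrow> t \<le> a \<or> (\<exists>v\<in>V. i \<in> M (X (x v)) \<and> t \<le> x v)" for t i
    unfolding xs_def using finV by (subst Max_ge_iff) auto
  have xs_box: "a \<le> xs i \<and> xs i \<le> b" for i
    unfolding xs_def using finV ab xb_ by (auto simp: Max_le_iff)
  have XV: "X t \<subseteq> V" for t unfolding X_def by auto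
  have lev: "{i\<in>W. t \<le> xs i} = M (X t)" if "t \<le> b" for t
  proof (cases "t \<le> a")
    case True
    hence "X t = V" unfolding X_def using xa by fastforce
    thus ?thesis using True xs_ge MV by auto
  next
    case False
    have ne: "{v\<in>V. t \<le> x v} \<noteq> {}"
    proof -
      obtain v where "v \<in> V" "x v = b" using assms(10) finV neV
        by (metis (mono_tags, lifting) Max_in finite_imageI image_iff image_is_empty)
      thus ?thesis using that by auto
    qed
    define w where "w = arg_min_on x {v\<in>V. t \<le> x v}"
    have w: "w \<in> V" "t \<le> x w" "\<And>v. v \<in> V \<Longrightarrow> t \<le> x v \<Longrightarrow> x w \<le> x v"
      using arg_min_if_finite[of "{v\<in>V. t \<le> x v}" x] ne finV unfolding w_def
      by (auto simp: arg_min_on_def)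
    have Xw: "X (x w) = X t" unfolding X_def using w by force
    show ?thesis
    proof safe
      fix i assume "i \<in> W" "t \<le> xs i"
      then obtain v where v: "v \<in> V" "i \<in> M (X (x v))" "t \<le> x v" using xs_ge False by auto
      have "X (x v) \<subseteq> X t" unfolding X_def using v by auto
      thus "i \<in> M (X t)" using M_mono XV v by blast
    next
      fix i assume "i \<in> M (X t)"
      thus "i \<in> W" using M_in[OF XV] unfolding Mz_def by auto
      show "t \<le> xs i" using xs_ge w Xw \<open>i \<in> M (X t)\<close> by auto
    qed
  qed
  have P2: "L xs \<le> L xb" for xb
  proof (rule cmpL)
    fix t
    show "G ({i\<in>V. t \<le> x i} \<union> {i\<in>W. t \<le> xs i})
        \<le> G ({i\<in>V. t \<le> x i} \<union> {i\<in>W. t \<le> xb i})"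
    proof (cases "t \<le> b")
      case True
      have "M (X t) \<in> Mz (X t)" using M_in XV by auto
      thus ?thesis using lev[OF True] unfolding X_def Mz_def by auto
    next
      case False
      have h1: "\<not> t \<le> x i" if "i \<in> V" for i using xb_[OF that] False by linarith
      have h2: "\<not> t \<le> xs i" for i using xs_box[of i] False by linarith
      have "{i\<in>V. t \<le> x i} \<union> {i\<in>W. t \<le> xs i} = {}"
        using h1 h2 by blast
      hence "G ({i\<in>V. t \<le> x i} \<union> {i\<in>W. t \<le> xs i}) = G {}" by (rule arg_cong)
      hence "G ({i\<in>V. t \<le> x i} \<union> {i\<in>W. t \<le> xs i}) = 0" using G0 by linarith
      thus ?thesis using nnG[of t xb] by linarith
    qed
  qed
  have fold: "(\<lambda>xb. lovasz G (V \<union> W) (joint V x xb)) = L" unfolding L_def by simp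
  show ?thesis unfolding fold L_def[symmetric]
  proof (intro conjI allI impI)
    fix xb show "L (proj a b xb) \<le> L xb" by (rule P1)
  next
    fix a' b' :: real assume "a' < a" "b < b'"
    hence box: "xs \<in> {xb. \<forall>i\<in>W. a' \<le> xb i \<and> xb i \<le> b'}" "xs \<in> {xb. \<forall>i\<in>W. a \<le> xb i \<and> xb i \<le> b}"
      using xs_box by (auto intro: order_trans less_imp_le)
    show "\<exists>m. is_min_value m UNIV L \<and> is_min_value m {xb. \<forall>i\<in>W. a' \<le> xb i \<and> xb i \<le> b'} L
         \<and> is_min_value m {xb. \<forall>i\<in>W. a \<le> xb i \<and> xb i \<le> b} L"
      by (rule exI[of _ "L xs"]) (use box P2 in \<open>auto simp: is_min_value_def\<close>)
  qed
qed

end
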